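(* Let $\Sigma$ be a finite connected multigraph (loops allowed) and $\varphi\colon V(\Sigma)\to\mathbb{R}$. Then \[\max_v\varphi(v)-\min_v\varphi(v)\le M(\Delta(\varphi))\cdot\operatorname{diam}(\Sigma).\]
   Context: For $\varphi\colon V(\Sigma)\to\mathbb{R}$, the Laplacian is the divisor (real-valued function on vertices) $\Delta(\varphi)(v)=\sum_{e=vw}(\varphi(v)-\varphi(w))$, the sum over edges $e$ incident to $v$ with other endpoint $w$ (loops contribute $0$). For $f\colon V(\Sigma)\to\mathbb{R}$, $M(f)=\max_{S\subseteq V(\Sigma)}\left|\sum_{v\in S}f(v)\right|$. $\operatorname{diam}(\Sigma)$ is the maximum over pairs of vertices of the number of edges in a shortest path joining them. *)

theory Defs
  imports Complex_Main
begin

text \<open>A finite multigraph (loops and parallel edges allowed) is given by a vertex set V,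
  an edge set E, and an endpoint map ends assigning to each edge its (unordered) pair of
  endpoints, represented as a pair; a loop has ends e = (v, v).\<close>

definition multigraph :: "'v set \<Rightarrow> 'e set \<Rightarrow> ('e \<Rightarrow> 'v \<times> 'v) \<Rightarrow> bool" where
  "multigraph V E ends \<longleftrightarrow> finite V \<and> finite E \<and>
     (\<forall>e\<in>E. fst (ends e) \<in> V \<and> snd (ends e) \<in> V)"

definition incident :: "('e \<Rightarrow> 'v \<times> 'v) \<Rightarrow> 'e \<Rightarrow> 'v \<Rightarrow> bool" where
  "incident ends e v \<longleftrightarrow> fst (ends e) = v \<or> snd (ends e) = v"

definition other_end :: "('e \<Rightarrow> 'v \<times> 'v) \<Rightarrow> 'e \<Rightarrow> 'v \<Rightarrow> 'v" where
  "other_end ends e v = (if fst (ends e) = v then snd (ends e) else fst (ends e))"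

definition laplacian :: "'e set \<Rightarrow> ('e \<Rightarrow> 'v \<times> 'v) \<Rightarrow> ('v \<Rightarrow> real) \<Rightarrow> 'v \<Rightarrow> real" where
  "laplacian E ends \<phi> v = (\<Sum>e\<in>{e\<in>E. incident ends e v}. \<phi> v - \<phi> (other_end ends e v))"

definition adj_rel :: "'e set \<Rightarrow> ('e \<Rightarrow> 'v \<times> 'v) \<Rightarrow> ('v \<times> 'v) set" where
  "adj_rel E ends = {(u, w). \<exists>e\<in>E. ends e = (u, w) \<or> ends e = (w, u)}"

definition connected_mg :: "'v set \<Rightarrow> 'e set \<Rightarrow> ('e \<Rightarrow> 'v \<times> 'v) \<Rightarrow> bool" where
  "connected_mg V E ends \<longleftrightarrow> V \<noteq> {} \<and> (\<forall>u\<in>V. \<forall>w\<in>V. (u, w) \<in> (adj_rel E ends)\<^sup>*)"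

definition gdist :: "'e set \<Rightarrow> ('e \<Rightarrow> 'v \<times> 'v) \<Rightarrow> 'v \<Rightarrow> 'v \<Rightarrow> nat" where
  "gdist E ends u w = (LEAST n. (u, w) \<in> (adj_rel E ends) ^^ n)"

definition diam :: "'v set \<Rightarrow> 'e set \<Rightarrow> ('e \<Rightarrow> 'v \<times> 'v) \<Rightarrow> nat" where
  "diam V E ends = Max {gdist E ends u w | u w. u \<in> V \<and> w \<in> V}"

definition Mnorm :: "'v set \<Rightarrow> ('v \<Rightarrow> real) \<Rightarrow> real" where
  "Mnorm V f = Max {\<bar>\<Sum>v\<in>S. f v\<bar> | S. S \<subseteq> V}"

end

theory Submission
  imports Defs
begin

lemma edge_term:
  fixes \<phi> :: "'v \<Rightarrow> real"
  assumes "ends e = (x,y)"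
  shows "(\<Sum>v\<in>{v\<in>S. incident ends e v}. \<phi> v - \<phi> (other_end ends e v)) =
    (if x = y then 0 else (if x\<in>S then \<phi> x - \<phi> y else 0) + (if y\<in>S then \<phi> y - \<phi> x else 0))"
proof -
  have set: "{v\<in>S. incident ends e v} = (if x\<in>S then {x} else {}) \<union> (if y\<in>S then {y} else {})"
    using assms by (auto simp: incident_def)
  show ?thesis
  proof (cases "x = y")
    case True
    then show ?thesis unfolding set using assms by (auto simp: other_end_def)
  next
    case False
    then show ?thesis unfolding set using assms
      by (auto simp: other_end_def sum.union_disjoint)
  qed
qed

lemma cut_bound:
  assumes mg: "multigraph V E ends" and e: "e \<in> E" and ends: "ends e = (x,y) \<or> ends e = (y,x)"
    and lt: "\<phi> y < \<phi> x"
  shows "\<phi> x - \<phi> y \<le> Mnorm V (laplacian E ends \<phi>)"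
proof -
  define S where "S = {v\<in>V. \<phi> x \<le> \<phi> v}"
  have fV: "finite V" and fE: "finite E" and inV: "\<forall>e\<in>E. fst (ends e) \<in> V \<and> snd (ends e) \<in> V"
    using mg by (auto simp: multigraph_def)
  have fS: "finite S" using fV by (simp add: S_def)
  define h where "h e = (\<Sum>v\<in>{v\<in>S. incident ends e v}. \<phi> v - \<phi> (other_end ends e v))" for e
  have swap: "(\<Sum>v\<in>S. laplacian E ends \<phi> v) = (\<Sum>e\<in>E. h e)"
    unfolding laplacian_def h_def using fS fE by (rule sum.swap_restrict)
  have hnn: "0 \<le> h e'" if "e' \<in> E" for e'
  proof -
    obtain a b where ab: "ends e' = (a,b)" by (cases "ends e'")
    have "a \<in> V" "b \<in> V" using inV that ab by force+
    then show ?thesis unfolding h_def edge_term[of ends e' a b, OF ab] by (auto simp: S_def)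
  qed
  have "x \<in> V" "y \<in> V" using inV e ends by force+
  have he: "h e = \<phi> x - \<phi> y" using ends
  proof
    assume ee: "ends e = (x,y)"
    then show ?thesis unfolding h_def edge_term[of ends e x y, OF ee] using lt \<open>x\<in>V\<close> \<open>y\<in>V\<close> by (auto simp: S_def)
  next
    assume ee: "ends e = (y,x)"
    then show ?thesis unfolding h_def edge_term[of ends e y x, OF ee] using lt \<open>x\<in>V\<close> \<open>y\<in>V\<close> by (auto simp: S_def)
  qed
  have "h e \<le> (\<Sum>e\<in>E. h e)" by (rule member_le_sum[OF e]) (use hnn fE in auto)
  also have "\<dots> \<le> \<bar>\<Sum>v\<in>S. laplacian E ends \<phi> v\<bar>" using swap by simp
  also have "\<dots> \<le> Mnorm V (laplacian E ends \<phi>)"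
    unfolding Mnorm_def
  proof (rule Max_ge)
    have "{\<bar>\<Sum>v\<in>S. laplacian E ends \<phi> v\<bar> | S. S \<subseteq> V} = (\<lambda>S. \<bar>\<Sum>v\<in>S. laplacian E ends \<phi> v\<bar>) ` Pow V"
      by auto
    then show "finite {\<bar>\<Sum>v\<in>S. laplacian E ends \<phi> v\<bar> | S. S \<subseteq> V}" using fV by simp
    show "\<bar>\<Sum>v\<in>S. laplacian E ends \<phi> v\<bar> \<in> {\<bar>\<Sum>v\<in>S. laplacian E ends \<phi> v\<bar> | S. S \<subseteq> V}"
      by (auto simp: S_def)
  qed
  finally show ?thesis using he by simp
qed

lemma Mnorm_nonneg:
  assumes "finite V" shows "0 \<le> Mnorm V f"
  unfolding Mnorm_def
proof (rule order.trans[OF _ Max_ge])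
  have "{\<bar>\<Sum>v\<in>S. f v\<bar> | S. S \<subseteq> V} = (\<lambda>S. \<bar>\<Sum>v\<in>S. f v\<bar>) ` Pow V" by auto
  then show "finite {\<bar>\<Sum>v\<in>S. f v\<bar> | S. S \<subseteq> V}" using assms by simp
  show "\<bar>\<Sum>v\<in>{}. f v\<bar> \<in> {\<bar>\<Sum>v\<in>S. f v\<bar> | S. S \<subseteq> V}" by blast
qed simp

lemma adj_bound:
  assumes mg: "multigraph V E ends" and "(u,w) \<in> adj_rel E ends"
  shows "\<phi> w - \<phi> u \<le> Mnorm V (laplacian E ends \<phi>)"
proof -
  have M0: "0 \<le> Mnorm V (laplacian E ends \<phi>)" using mg Mnorm_nonneg by (auto simp: multigraph_def)
  obtain e where e: "e \<in> E" "ends e = (u,w) \<or> ends e = (w,u)" using assms(2) by (auto simp: adj_rel_def)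
  show ?thesis
  proof (cases "\<phi> u < \<phi> w")
    case True
    then show ?thesis using cut_bound[OF mg e(1), of w u \<phi>] e(2) by blast
  qed (use M0 in linarith)
qed

lemma path_bound:
  assumes mg: "multigraph V E ends" and "(a,b) \<in> (adj_rel E ends) ^^ n"
  shows "\<phi> b - \<phi> a \<le> real n * Mnorm V (laplacian E ends \<phi>)"
  using assms(2)
proof (induction n arbitrary: b)
  case 0 then show ?case by simp
next
  case (Suc n)
  then obtain c where c: "(a,c) \<in> (adj_rel E ends) ^^ n" "(c,b) \<in> adj_rel E ends" by auto
  have "\<phi> c - \<phi> a \<le> real n * Mnorm V (laplacian E ends \<phi>)" using Suc.IH[OF c(1)] .
  moreover have "\<phi> b - \<phi> c \<le> Mnorm V (laplacian E ends \<phi>)" using adj_bound[OF mg c(2)] .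
  ultimately show ?case by (simp add: algebra_simps)
qed

theorem mainTheorem7:
  fixes V :: "'v set" and E :: "'e set" and ends :: "'e \<Rightarrow> 'v \<times> 'v"
    and \<phi> :: "'v \<Rightarrow> real"
  assumes "multigraph V E ends" and "connected_mg V E ends"
  shows "Max (\<phi> ` V) - Min (\<phi> ` V)
           \<le> Mnorm V (laplacian E ends \<phi>) * real (diam V E ends)"
proof -
  have fV: "finite V" using assms(1) by (simp add: multigraph_def)
  have ne: "V \<noteq> {}" and conn: "\<forall>u\<in>V. \<forall>w\<in>V. (u, w) \<in> (adj_rel E ends)\<^sup>*"
    using assms(2) by (auto simp: connected_mg_def)
  have "Max (\<phi> ` V) \<in> \<phi> ` V" using Max_in[of "\<phi> ` V"] fV ne by auto
  then obtain b where b: "b \<in> V" "\<phi> b = Max (\<phi> ` V)" by auto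
  have "Min (\<phi> ` V) \<in> \<phi> ` V" using Min_in[of "\<phi> ` V"] fV ne by auto
  then obtain a where a: "a \<in> V" "\<phi> a = Min (\<phi> ` V)" by auto
  obtain n where "(a,b) \<in> (adj_rel E ends) ^^ n"
    using conn a(1) b(1) rtrancl_power by blast
  then have g: "(a,b) \<in> (adj_rel E ends) ^^ gdist E ends a b"
    unfolding gdist_def by (rule LeastI)
  have "gdist E ends a b \<le> diam V E ends"
    unfolding diam_def
  proof (rule Max_ge)
    have "{gdist E ends u w | u w. u \<in> V \<and> w \<in> V} = (\<lambda>(u,w). gdist E ends u w) ` (V \<times> V)"
      by auto
    then show "finite {gdist E ends u w | u w. u \<in> V \<and> w \<in> V}" using fV by simp
  qed (use a b in blast)
  moreover have M0: "0 \<le> Mnorm V (laplacian E ends \<phi>)" using fV Mnorm_nonneg by auto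
  ultimately have "real (gdist E ends a b) * Mnorm V (laplacian E ends \<phi>)
      \<le> real (diam V E ends) * Mnorm V (laplacian E ends \<phi>)"
    by (intro mult_right_mono) auto
  with path_bound[OF assms(1) g, of \<phi>] a b show ?thesis by (simp add: mult.commute)
qed

end
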